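(* Suppose $f(\cdot;0,1)$ satisfies Condition C3 and that for every $\mu\in\mathbb{R}$, $$\int_{\mathbb{R}}\{\log f(x;\mu,1)\}\,f(x;0,1)\,dx>-\infty.$$ Then for every $\Psi_0\in\boldsymbol{\Psi}_m$ and every $\sigma_0>0$, $\int_{\mathbb{R}}|\log g(x;\Psi_0,\sigma_0)|\,g(x;\Psi_0,\sigma_0)\,dx<\infty$ (i.e. Condition C2 holds).
   Context: Fix a positive integer $m$. Let $f(x;0,1)$ be a probability density on $\mathbb{R}$, $f(x;\mu,\sigma)=\sigma^{-1}f((x-\mu)/\sigma;0,1)$, $\boldsymbol{\Psi}_m=\{\sum_{j=1}^m\alpha_j I(\mu_j\le\mu):\alpha_j\ge0,\sum_j\alpha_j=1,\mu_j\in\mathbb{R}\}$, $g(x;\Psi,\sigma)=\sum_{j=1}^m\alpha_j f(x;\mu_j,\sigma)$. (C3) There exist $v_0,v_1>0$ and $\beta>1$ such that $f(x;0,1)\le\min\{v_0,v_1|x|^{-\beta}\}$ for all $x$. *)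

theory Defs
  imports "HOL-Analysis.Analysis"
begin

definition ls_dens :: "(real \<Rightarrow> real) \<Rightarrow> real \<Rightarrow> real \<Rightarrow> real \<Rightarrow> real" where
  "ls_dens f0 x \<mu> \<sigma> = f0 ((x - \<mu>) / \<sigma>) / \<sigma>"

definition is_density :: "(real \<Rightarrow> real) \<Rightarrow> bool" where
  "is_density f0 \<longleftrightarrow> f0 \<in> borel_measurable borel \<and> (\<forall>x. 0 \<le> f0 x)
     \<and> integrable lborel f0 \<and> integral\<^sup>L lborel f0 = 1"

text \<open>Condition (C3). The bound v1 |x|^-beta is read as +infinity at x = 0.\<close>
definition cond_C3 :: "(real \<Rightarrow> real) \<Rightarrow> bool" where
  "cond_C3 f0 \<longleftrightarrow> (\<exists>v0 v1 \<beta>. v0 > 0 \<and> v1 > 0 \<and> \<beta> > 1 \<and>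
     (\<forall>x. f0 x \<le> v0 \<and> (x \<noteq> 0 \<longrightarrow> f0 x \<le> v1 * \<bar>x\<bar> powr (-\<beta>))))"

text \<open>Mixing distribution Psi in Psi_m, given by weights alpha_j and atoms mu_j, j < m.\<close>
definition in_Psi :: "nat \<Rightarrow> (nat \<Rightarrow> real) \<Rightarrow> (nat \<Rightarrow> real) \<Rightarrow> bool" where
  "in_Psi m \<alpha> \<mu> \<longleftrightarrow> (\<forall>j<m. 0 \<le> \<alpha> j) \<and> (\<Sum>j<m. \<alpha> j) = 1"

definition mix_dens :: "(real \<Rightarrow> real) \<Rightarrow> nat \<Rightarrow> (nat \<Rightarrow> real) \<Rightarrow> (nat \<Rightarrow> real) \<Rightarrow> real \<Rightarrow> real \<Rightarrow> real" where
  "mix_dens f0 m \<alpha> \<mu> \<sigma> x = (\<Sum>j<m. \<alpha> j * ls_dens f0 x (\<mu> j) \<sigma>)"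

definition neg_log :: "real \<Rightarrow> ennreal" where
  "neg_log y = (if y > 0 then ennreal (max 0 (- ln y)) else \<infinity>)"

end

theory Submission
  imports Defs
begin

lemma affine_int:
  fixes F :: "real \<Rightarrow> real"
  assumes "integrable lborel F" "\<sigma> > 0"
  shows "integrable lborel (\<lambda>x. F ((x - \<mu>) / \<sigma>))"
proof -
  have "integrable lborel (\<lambda>x. F ((- \<mu> / \<sigma>) + (1/\<sigma>) * x))"
    using lborel_integrable_real_affine[OF assms(1), of "1/\<sigma>" "- \<mu> / \<sigma>"] assms(2) by simp
  moreover have "(\<lambda>x. F ((- \<mu> / \<sigma>) + (1/\<sigma>) * x)) = (\<lambda>x. F ((x - \<mu>) / \<sigma>))"
    using assms(2) by (auto simp: field_simps)
  ultimately show ?thesis by simp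
qed

theorem proposition1:
  fixes f0 :: "real \<Rightarrow> real" and m :: nat
  assumes "m > 0"
    and "is_density f0"
    and "cond_C3 f0"
    and "\<forall>\<mu>::real. (\<integral>\<^sup>+ x. ennreal (f0 x) * neg_log (ls_dens f0 x \<mu> 1) \<partial>lborel) < \<infinity>"
  shows "\<forall>\<alpha> \<mu> \<sigma>0. in_Psi m \<alpha> \<mu> \<and> \<sigma>0 > 0 \<longrightarrow>
     (\<integral>\<^sup>+ x. ennreal (\<bar>ln (mix_dens f0 m \<alpha> \<mu> \<sigma>0 x)\<bar> * mix_dens f0 m \<alpha> \<mu> \<sigma>0 x) \<partial>lborel) < \<infinity>"
proof (intro allI impI, elim conjE)
  fix \<alpha> \<mu> and \<sigma>0 :: real
  assume Psi: "in_Psi m \<alpha> \<mu>" and s0: "\<sigma>0 > 0"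
  have apos: "\<And>j. j < m \<Longrightarrow> 0 \<le> \<alpha> j" and asum: "(\<Sum>j<m. \<alpha> j) = 1"
    using Psi unfolding in_Psi_def by auto
  have fmeas: "f0 \<in> borel_measurable borel" and fnn: "\<And>x. 0 \<le> f0 x" and fint: "integrable lborel f0"
    using assms(2) unfolding is_density_def by auto
  obtain v0 v1 \<beta> where v0: "v0 > 0" and fb: "\<And>x. f0 x \<le> v0"
    using assms(3) unfolding cond_C3_def by blast
  define N where "N t = max 0 (- ln t)" for t :: real
  define D where "D k = \<bar>ln (\<alpha> k)\<bar> + \<bar>ln \<sigma>0\<bar>" for k
  define L where "L = max 0 (ln (v0 / \<sigma>0))"
  define y where "y k x = (x - \<mu> k) / \<sigma>0" for k x
  define a where "a k x = \<alpha> k * f0 (y k x) / \<sigma>0" for k x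
  define g where "g x = mix_dens f0 m \<alpha> \<mu> \<sigma>0 x" for x
  have g_eq: "g x = (\<Sum>k<m. a k x)" for x
    unfolding g_def mix_dens_def ls_dens_def a_def y_def by simp
  have a_nn: "k < m \<Longrightarrow> 0 \<le> a k x" for k x
    unfolding a_def using apos fnn s0 by simp
  have N_nn: "0 \<le> N t" for t unfolding N_def by simp
  have D_nn: "0 \<le> D k" for k unfolding D_def by simp
  define h where "h x = L * g x + (\<Sum>k<m. a k x * (N (f0 (y k x)) + D k))" for x
  have fN_int: "integrable lborel (\<lambda>x. f0 x * N (f0 x))"
  proof (rule integrableI_nonneg)
    show "(\<lambda>x. f0 x * N (f0 x)) \<in> borel_measurable lborel"
      unfolding N_def using fmeas by measurable
    show "AE x in lborel. 0 \<le> f0 x * N (f0 x)" using fnn N_nn by simp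
    have "(\<integral>\<^sup>+ x. ennreal (f0 x * N (f0 x)) \<partial>lborel)
        \<le> (\<integral>\<^sup>+ x. ennreal (f0 x) * neg_log (ls_dens f0 x 0 1) \<partial>lborel)"
    proof (rule nn_integral_mono)
      fix x
      show "ennreal (f0 x * N (f0 x)) \<le> ennreal (f0 x) * neg_log (ls_dens f0 x 0 1)"
      proof (cases "f0 x > 0")
        case True
        then show ?thesis unfolding neg_log_def ls_dens_def N_def
          by (simp add: ennreal_mult)
      next
        case False
        then have "f0 x = 0" using fnn[of x] by simp
        then show ?thesis by simp
      qed
    qed
    also have "\<dots> < \<infinity>" using assms(4) by blast
    finally show "(\<integral>\<^sup>+ x. ennreal (f0 x * N (f0 x)) \<partial>lborel) < \<infinity>" .
  qed
  have g_int: "integrable lborel g"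
  proof -
    have ik: "integrable lborel (\<lambda>x. \<alpha> k * f0 (y k x) / \<sigma>0)" for k
    proof -
      have "integrable lborel (\<lambda>x. f0 (y k x))"
        unfolding y_def by (rule affine_int[OF fint s0])
      then show ?thesis by simp
    qed
    show ?thesis unfolding g_eq a_def by (intro Bochner_Integration.integrable_sum ik)
  qed
  have h_int: "integrable lborel h"
  proof -
    have "integrable lborel (\<lambda>x. a k x * (N (f0 (y k x)) + D k))" for k
    proof -
      have e: "(\<lambda>x. a k x * (N (f0 (y k x)) + D k)) =
        (\<lambda>x. \<alpha> k / \<sigma>0 * (f0 (y k x) * N (f0 (y k x))) + (\<alpha> k * D k / \<sigma>0) * f0 (y k x))"
        unfolding a_def by (rule ext) (simp add: field_simps add_divide_distrib)
      have i1: "integrable lborel (\<lambda>x. f0 (y k x) * N (f0 (y k x)))"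
        unfolding y_def by (rule affine_int[OF fN_int s0])
      have i2: "integrable lborel (\<lambda>x. f0 (y k x))"
        unfolding y_def by (rule affine_int[OF fint s0])
      show ?thesis unfolding e
        by (intro Bochner_Integration.integrable_add Bochner_Integration.integrable_mult_right i1 i2)
    qed
    then show ?thesis unfolding h_def
      by (intro Bochner_Integration.integrable_add Bochner_Integration.integrable_mult_right Bochner_Integration.integrable_sum g_int)
  qed
  have pw: "\<bar>ln (g x)\<bar> * g x \<le> h x" for x
  proof -
    have h_nn1: "0 \<le> (\<Sum>k<m. a k x * (N (f0 (y k x)) + D k))"
      by (intro sum_nonneg mult_nonneg_nonneg a_nn add_nonneg_nonneg N_nn D_nn) auto
    have g_nn: "0 \<le> g x" unfolding g_eq by (intro sum_nonneg a_nn) auto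
    have L_nn: "0 \<le> L" unfolding L_def by simp
    show ?thesis
    proof (cases "g x = 0")
      case True
      then show ?thesis unfolding h_def using h_nn1 by simp
    next
      case False
      then have gp: "g x > 0" using g_nn by simp
      have gle: "g x \<le> v0 / \<sigma>0"
      proof -
        have "g x \<le> (\<Sum>k<m. \<alpha> k * v0 / \<sigma>0)" unfolding g_eq a_def
          by (intro sum_mono divide_right_mono mult_left_mono fb apos) (use s0 in auto)
        also have "\<dots> = (\<Sum>k<m. \<alpha> k) * v0 / \<sigma>0" by (simp add: sum_distrib_right sum_divide_distrib)
        finally show ?thesis using asum by simp
      qed
      have p1: "g x * max (ln (g x)) 0 \<le> L * g x"
      proof -
        have "ln (g x) \<le> ln (v0 / \<sigma>0)" using gle gp by simp
        then have "max (ln (g x)) 0 \<le> L" unfolding L_def by simp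
        then show ?thesis using gp by (simp add: mult.commute mult_left_mono)
      qed
      have p2: "g x * max (- ln (g x)) 0 \<le> (\<Sum>k<m. a k x * (N (f0 (y k x)) + D k))"
        unfolding g_eq sum_distrib_right
      proof (intro sum_mono)
        fix k assume k: "k \<in> {..<m}"
        show "a k x * max (- ln (\<Sum>k<m. a k x)) 0 \<le> a k x * (N (f0 (y k x)) + D k)"
        proof (cases "a k x = 0")
          case True then show ?thesis by simp
        next
          case False
          then have akp: "a k x > 0" using a_nn[of k x] k by simp
          have alp: "\<alpha> k > 0" and fp: "f0 (y k x) > 0"
            using akp apos[of k] fnn[of "y k x"] k s0 unfolding a_def
            by (auto simp: zero_less_mult_iff zero_less_divide_iff)
          have "a k x \<le> (\<Sum>k<m. a k x)"
            using k by (intro member_le_sum a_nn) auto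
          then have "- ln (\<Sum>k<m. a k x) \<le> - ln (a k x)" using akp by simp
          also have "- ln (a k x) = - ln (\<alpha> k) - ln (f0 (y k x)) + ln \<sigma>0"
            unfolding a_def using alp fp s0 by (simp add: ln_mult ln_div)
          also have "\<dots> \<le> N (f0 (y k x)) + D k" unfolding N_def D_def by linarith
          finally have "max (- ln (\<Sum>k<m. a k x)) 0 \<le> N (f0 (y k x)) + D k"
            using N_nn D_nn by (simp add: add_nonneg_nonneg)
          then show ?thesis using akp by (simp add: mult_left_mono)
        qed
      qed
      have "\<bar>ln (g x)\<bar> * g x = g x * max (ln (g x)) 0 + g x * max (- ln (g x)) 0"
        by (simp add: abs_if max_def algebra_simps)
      also have "\<dots> \<le> h x" unfolding h_def using p1 p2 by linarith
      finally show ?thesis .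
    qed
  qed
  have "(\<integral>\<^sup>+ x. ennreal (\<bar>ln (g x)\<bar> * g x) \<partial>lborel) \<le> (\<integral>\<^sup>+ x. ennreal (norm (h x)) \<partial>lborel)"
    by (intro nn_integral_mono ennreal_leI) (use pw in \<open>auto intro: order_trans[OF _ abs_ge_self]\<close>)
  also have "\<dots> < \<infinity>" using h_int unfolding integrable_iff_bounded by simp
  finally show "(\<integral>\<^sup>+ x. ennreal (\<bar>ln (mix_dens f0 m \<alpha> \<mu> \<sigma>0 x)\<bar> * mix_dens f0 m \<alpha> \<mu> \<sigma>0 x) \<partial>lborel) < \<infinity>"
    unfolding g_def .
qed

end
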